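(* Let $(Y_i,X_i)$, $i=1,\dots,n$, be i.i.d. from $P^*_{Y,X}=P^*_{Y\mid X}P^*_X$ on $\{1,\dots,K\}\times\mathbb{R}^d$, where $P^*_X$ is absolutely continuous with respect to Lebesgue measure with density also denoted $P^*_X(\cdot)$. Fix $\alpha\in\mathbb{R}_+^K$ (positive entries), $\alpha_0=\sum_k\alpha(k)$. Let $\mathrm{DE}^{\psi}:\mathbb{R}^d\to\mathbb{R}_+$ be a density estimator and $\mathrm{NN}^{\phi}:\mathbb{R}^d\to\mathbb{R}_+^K$ a neural network estimator of $P^*_{Y\mid X}$, with parameters $\widehat{\psi}_n,\widehat{\phi}_n$ fitted on the data, and consider the DIP-EDL variational distribution $$q_{X_i}=\mathrm{Dir}\big(\alpha+n\,\mathrm{DE}^{\widehat\psi_n}(X_i)\,\mathrm{NN}^{\widehat\phi_n}(X_i)\big).$$ Assume the estimators are consistent: $\mathrm{DE}^{\widehat\psi_n}(X_i)\xrightarrow{p}P^*_X(X_i)$ and $\mathrm{NN}^{\widehat\phi_n}(X_i)\xrightarrow{p}P^*_{Y\mid X}(\cdot\mid X_i)$ as $n\to\infty$. Then, if $p_i\mid X_{1:n},Y_{1:n}$ is distributed according to $q_{X_i}$, we have $p_i\xrightarrow{p}P^*_{Y\mid X}(\cdot\mid X_i)$ as $n\to\infty$.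
   Context: $\mathrm{Dir}(\beta)$ is the Dirichlet distribution on the probability simplex $\Delta^{K-1}$ with concentration vector $\beta\in\mathbb{R}_+^K$; $P^*_{Y\mid X}(\cdot\mid x)\in\Delta^{K-1}$ denotes the vector of true conditional class probabilities at $x$. *)

theory Defs
  imports "HOL-Probability.Probability"
begin

(* Vectors in R^K are represented as functions nat => real, with the K
   coordinates indexed by 0..K-1 (class k+1 of the paper is index k). *)

definition vdist :: "nat \<Rightarrow> (nat \<Rightarrow> real) \<Rightarrow> (nat \<Rightarrow> real) \<Rightarrow> real" where
  "vdist K u v = sqrt (\<Sum>k<K. (u k - v k)^2)"

text \<open>Dirichlet density on the probability simplex (w.r.t. Lebesgue measure on the
  first K-1 coordinates), evaluated at a full vector q of R^K.\<close>
definition dirichlet_density :: "nat \<Rightarrow> (nat \<Rightarrow> real) \<Rightarrow> (nat \<Rightarrow> real) \<Rightarrow> real" where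
  "dirichlet_density K \<beta> q =
     (if (\<forall>k<K. 0 < q k) then
        Gamma (\<Sum>k<K. \<beta> k) / (\<Prod>k<K. Gamma (\<beta> k)) * (\<Prod>k<K. q k powr (\<beta> k - 1))
      else 0)"

definition simplex_lift :: "nat \<Rightarrow> (nat \<Rightarrow> real) \<Rightarrow> (nat \<Rightarrow> real)" where
  "simplex_lift K q' = (\<lambda>k\<in>{..<K}. if k < K - 1 then q' k else 1 - (\<Sum>j<K - 1. q' j))"

definition dirichlet :: "nat \<Rightarrow> (nat \<Rightarrow> real) \<Rightarrow> (nat \<Rightarrow> real) measure" where
  "dirichlet K \<beta> =
     distr (density (PiM {..<K - 1} (\<lambda>_. lborel))
                    (\<lambda>q'. ennreal (dirichlet_density K \<beta> (simplex_lift K q'))))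
           (PiM {..<K} (\<lambda>_. borel)) (simplex_lift K)"

definition data_sigma :: "'a measure \<Rightarrow> (nat \<Rightarrow> 'a \<Rightarrow> 'x::euclidean_space) \<Rightarrow> (nat \<Rightarrow> 'a \<Rightarrow> nat)
    \<Rightarrow> nat \<Rightarrow> 'a measure" where
  "data_sigma M X Y n =
     vimage_algebra (space M) (\<lambda>\<omega>. \<lambda>j\<in>{..<n}. (X j \<omega>, Y j \<omega>))
       (PiM {..<n} (\<lambda>_. (borel :: 'x measure) \<Otimes>\<^sub>M count_space UNIV))"

end

theory Submission
  imports Defs
begin

lemma beta_scaled:
  fixes a b s :: real assumes a: "a > 0" and b: "b > 0" and s: "s > 0"
  shows "(\<integral>\<^sup>+y. ennreal (indicator {0<..<s} y * (y powr (a-1) * (s-y) powr (b-1))) \<partial>lborel)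
         = ennreal (s powr (a+b-1) * Beta a b)"
proof -
  have h0: "((\<lambda>t. t powr (a - 1) * (1 - t) powr (b - 1)) has_integral Beta a b) {0<..<1}"
    using has_integral_Beta_real[OF a b] by (simp add: has_integral_Icc_iff_Ioo)
  have h1: "(\<integral>\<^sup>+u. ennreal (indicator {0<..<1} u * (u powr (a-1) * (1-u) powr (b-1))) \<partial>lborel) = ennreal (Beta a b)"
    using nn_integral_has_integral_lebesgue[OF _ h0] by simp
  have "(\<integral>\<^sup>+y. ennreal (indicator {0<..<s} y * (y powr (a-1) * (s-y) powr (b-1))) \<partial>lborel)
     = ennreal \<bar>s\<bar> * (\<integral>\<^sup>+x. ennreal (indicator {0<..<s} (0 + s*x) * ((0 + s*x) powr (a-1) * (s-(0 + s*x)) powr (b-1))) \<partial>lborel)"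
    using s by (intro nn_integral_real_affine) auto
  also have "\<dots> = ennreal s * (\<integral>\<^sup>+x. ennreal (s powr (a+b-2)) * ennreal (indicator {0<..<1} x * (x powr (a-1) * (1-x) powr (b-1))) \<partial>lborel)"
  proof -
    have "ennreal (indicator {0<..<s} (0 + s*x) * ((0 + s*x) powr (a-1) * (s-(0 + s*x)) powr (b-1)))
        = ennreal (s powr (a+b-2)) * ennreal (indicator {0<..<1} x * (x powr (a-1) * (1-x) powr (b-1)))" for x
    proof (cases "0 < x \<and> x < 1")
      case True
      then have "s - s*x = s * (1-x)" by (simp add: algebra_simps)
      moreover have "s powr (a+b-2) = s powr (a-1) * s powr (b-1)"
        by (simp add: powr_add[symmetric])
      ultimately show ?thesis using True s
        by (simp add: ennreal_mult'[symmetric] powr_mult indicator_def mult_ac mult_pos_pos mult_less_cancel_left1)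
    next
      case False
      then have "\<not> (0 < s*x \<and> s*x < s)" using s
        by (metis mult_less_cancel_left_pos mult.right_neutral zero_less_mult_pos)
      then have "indicator {0<..<s} (0 + s*x) = (0::real)" "indicator {0<..<1} x = (0::real)"
        using False by (auto simp: indicator_def)
      then show ?thesis by simp
    qed
    then show ?thesis using s by simp
  qed
  also have "\<dots> = ennreal s * (ennreal (s powr (a+b-2)) * ennreal (Beta a b))"
    by (subst nn_integral_cmult) (auto simp: h1)
  also have "\<dots> = ennreal (s powr (a+b-1) * Beta a b)"
  proof -
    have "s * s powr (a+b-2) = s powr (a+b-1)" using s
    proof -
      have "s powr (a+b-1) = s powr (1 + (a+b-2))" by simp
      also have "\<dots> = s powr 1 * s powr (a+b-2)" by (simp only: powr_add)
      also have "\<dots> = s * s powr (a+b-2)" using s by simp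
      finally show ?thesis by simp
    qed
    moreover have "Beta a b \<ge> 0" using a b by (simp add: Beta_def Gamma_real_pos less_imp_le)
    ultimately show ?thesis using s
      by (simp add: ennreal_mult'[symmetric] ennreal_mult[symmetric] mult.assoc)
  qed
  finally show ?thesis .
qed

lemma comp_meas_lborel: "(\<lambda>x. x j) \<in> borel_measurable (PiM I (\<lambda>_. lborel :: real measure))"
proof (cases "j \<in> I")
  case True then show ?thesis using measurable_component_singleton[OF True, of "\<lambda>_. lborel"] by simp
next
  case False
  have "(\<lambda>x. undefined) \<in> borel_measurable (PiM I (\<lambda>_. lborel :: real measure))" by simp
  then show ?thesis
    by (rule measurable_cong[THEN iffD1, rotated]) (use False in \<open>auto simp: space_PiM PiE_def extensional_def\<close>)
qed

lemma comp_meas_borel: "(\<lambda>x. x j) \<in> borel_measurable (PiM I (\<lambda>_. borel :: real measure))"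
proof (cases "j \<in> I")
  case True then show ?thesis using measurable_component_singleton[OF True, of "\<lambda>_. borel"] by simp
next
  case False
  have "(\<lambda>x. undefined) \<in> borel_measurable (PiM I (\<lambda>_. borel :: real measure))" by simp
  then show ?thesis
    by (rule measurable_cong[THEN iffD1, rotated]) (use False in \<open>auto simp: space_PiM PiE_def extensional_def\<close>)
qed

definition ssimp :: "nat \<Rightarrow> real \<Rightarrow> (nat \<Rightarrow> real) set" where
  "ssimp m s = {x. (\<forall>j<m. 0 < x j) \<and> (\<Sum>j<m. x j) < s}"

definition dint :: "nat \<Rightarrow> (nat \<Rightarrow> real) \<Rightarrow> real \<Rightarrow> ennreal" where
  "dint m b s = (\<integral>\<^sup>+x. ennreal (indicator (ssimp m s) x * ((\<Prod>j<m. x j powr (b j - 1)) *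
       (s - (\<Sum>j<m. x j)) powr (b m - 1))) \<partial>PiM {..<m} (\<lambda>_. lborel))"

lemma meas_F[measurable]:
  "(\<lambda>x. ennreal (indicator (ssimp m s) x * ((\<Prod>j<m. x j powr (b j - 1)) *
       (s - (\<Sum>j<m. x j)) powr (c - 1)))) \<in> borel_measurable (PiM I (\<lambda>_. lborel))"
proof -
  note comp_meas_lborel[measurable]
  have [measurable]: "Measurable.pred (PiM I (\<lambda>_. lborel)) (\<lambda>x. x \<in> ssimp m s)"
    unfolding ssimp_def by measurable
  show ?thesis by measurable
qed

lemma dint_eq:
  assumes "\<And>j. j \<le> m \<Longrightarrow> 0 < b j" and "0 < s"
  shows "dint m b s = ennreal (s powr ((\<Sum>j\<le>m. b j) - 1) * (\<Prod>j\<le>m. Gamma (b j)) / Gamma (\<Sum>j\<le>m. b j))"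
  using assms
proof (induction m arbitrary: b s)
  case 0
  have "dint 0 b s = ennreal (s powr (b 0 - 1))"
    using 0 by (simp add: dint_def PiM_empty ssimp_def nn_integral_count_space_finite)
  moreover have "Gamma (b 0) > 0" using 0 by (intro Gamma_real_pos) auto
  ultimately show ?case by simp
next
  case (Suc m)
  interpret product_sigma_finite "\<lambda>_. lborel :: real measure" by standard
  define b' where "b' = b(m := b (Suc m))"
  have b'pos: "\<And>j. j \<le> m \<Longrightarrow> 0 < b' j" using Suc.prems by (auto simp: b'_def)
  let ?F = "\<lambda>x. ennreal (indicator (ssimp (Suc m) s) x * ((\<Prod>j<Suc m. x j powr (b j - 1)) *
       (s - (\<Sum>j<Suc m. x j)) powr (b (Suc m) - 1)))"
  let ?G = "\<lambda>y x. ennreal (indicator (ssimp m (s - y)) x * ((\<Prod>j<m. x j powr (b' j - 1)) *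
       ((s - y) - (\<Sum>j<m. x j)) powr (b' m - 1)))"
  let ?h = "\<lambda>y. ennreal (indicator {0<..<s} y * y powr (b m - 1))"
  have ins: "{..<Suc m} = insert m {..<m}" by auto
  have "dint (Suc m) b s = (\<integral>\<^sup>+x. ?F x \<partial>PiM (insert m {..<m}) (\<lambda>_. lborel))"
    unfolding dint_def ins ..
  also have "\<dots> = (\<integral>\<^sup>+y. (\<integral>\<^sup>+x. ?F (x(m := y)) \<partial>PiM {..<m} (\<lambda>_. lborel)) \<partial>lborel)"
    by (rule product_nn_integral_insert_rev) (simp, simp, rule meas_F)
  also have "\<dots> = (\<integral>\<^sup>+y. (\<integral>\<^sup>+x. ?h y * ?G y x \<partial>PiM {..<m} (\<lambda>_. lborel)) \<partial>lborel)"
  proof (intro nn_integral_cong)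
    fix y :: real and x :: "nat \<Rightarrow> real"
    have S: "(\<Sum>j<Suc m. (x(m := y)) j) = (\<Sum>j<m. x j) + y" by simp
    have P: "(\<Prod>j<Suc m. (x(m := y)) j powr (b j - 1)) = (\<Prod>j<m. x j powr (b' j - 1)) * y powr (b m - 1)"
      by (simp add: b'_def)
    have I: "(x(m := y) \<in> ssimp (Suc m) s) = ((0 < y \<and> y < s) \<and> x \<in> ssimp m (s - y))"
    proof
      assume a: "x(m := y) \<in> ssimp (Suc m) s"
      then have "\<forall>j<m. 0 < x j" "0 < y" "(\<Sum>j<m. x j) + y < s"
        by (auto simp: ssimp_def S less_Suc_eq)
      moreover then have "0 \<le> (\<Sum>j<m. x j)" by (intro sum_nonneg) auto
      ultimately show "(0 < y \<and> y < s) \<and> x \<in> ssimp m (s - y)" by (auto simp: ssimp_def)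
    next
      assume "(0 < y \<and> y < s) \<and> x \<in> ssimp m (s - y)"
      then show "x(m := y) \<in> ssimp (Suc m) s"
        by (auto simp: ssimp_def S less_Suc_eq)
    qed
    have "b' m = b (Suc m)" by (simp add: b'_def)
    then show "?F (x(m := y)) = ?h y * ?G y x"
      unfolding indicator_def I S P
      by (auto simp: ennreal_mult'[symmetric] mult_ac diff_diff_eq add.commute)
  qed
  also have "\<dots> = (\<integral>\<^sup>+y. ?h y * dint m b' (s - y) \<partial>lborel)"
    unfolding dint_def by (subst nn_integral_cmult) auto
  also have "\<dots> = (\<integral>\<^sup>+y. ennreal (indicator {0<..<s} y * (y powr (b m - 1) * (s - y) powr ((\<Sum>j\<le>m. b' j) - 1)))
        * ennreal ((\<Prod>j\<le>m. Gamma (b' j)) / Gamma (\<Sum>j\<le>m. b' j)) \<partial>lborel)"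
  proof (intro nn_integral_cong)
    fix y :: real
    show "?h y * dint m b' (s - y) = ennreal (indicator {0<..<s} y * (y powr (b m - 1) * (s - y) powr ((\<Sum>j\<le>m. b' j) - 1)))
        * ennreal ((\<Prod>j\<le>m. Gamma (b' j)) / Gamma (\<Sum>j\<le>m. b' j))"
    proof (cases "0 < y \<and> y < s")
      case True
      have "0 \<le> (\<Prod>j\<le>m. Gamma (b' j)) / Gamma (\<Sum>j\<le>m. b' j)"
        using b'pos by (intro divide_nonneg_nonneg prod_nonneg) (auto intro!: less_imp_le Gamma_real_pos sum_pos)
      then show ?thesis using True Suc.IH[of b' "s - y"] b'pos
        by (simp add: ennreal_mult'[symmetric] ennreal_mult[symmetric] mult_ac)
    next
      case False
      then have "indicator {0<..<s} y = (0::real)" by (auto simp: indicator_def)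
      then show ?thesis by simp
    qed
  qed
  also have "\<dots> = (\<integral>\<^sup>+y. ennreal (indicator {0<..<s} y * (y powr (b m - 1) * (s - y) powr ((\<Sum>j\<le>m. b' j) - 1))) \<partial>lborel)
        * ennreal ((\<Prod>j\<le>m. Gamma (b' j)) / Gamma (\<Sum>j\<le>m. b' j))"
    by (rule nn_integral_multc) measurable
  also have "\<dots> = ennreal (s powr (b m + (\<Sum>j\<le>m. b' j) - 1) * Beta (b m) (\<Sum>j\<le>m. b' j))
        * ennreal ((\<Prod>j\<le>m. Gamma (b' j)) / Gamma (\<Sum>j\<le>m. b' j))"
    using Suc.prems b'pos by (subst beta_scaled) (auto intro!: sum_pos)
  also have "\<dots> = ennreal (s powr ((\<Sum>j\<le>Suc m. b j) - 1) * (\<Prod>j\<le>Suc m. Gamma (b j)) / Gamma (\<Sum>j\<le>Suc m. b j))"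
  proof -
    have s1: "(\<Sum>j\<le>m. b' j) = (\<Sum>j<m. b j) + b (Suc m)"
      by (simp add: lessThan_Suc_atMost[symmetric] b'_def)
    have s2: "(\<Sum>j\<le>Suc m. b j) = (\<Sum>j<m. b j) + b m + b (Suc m)"
      by (simp add: lessThan_Suc_atMost[symmetric])
    have p1: "(\<Prod>j\<le>m. Gamma (b' j)) = (\<Prod>j<m. Gamma (b j)) * Gamma (b (Suc m))"
      by (simp add: lessThan_Suc_atMost[symmetric] b'_def)
    have p2: "(\<Prod>j\<le>Suc m. Gamma (b j)) = (\<Prod>j<m. Gamma (b j)) * Gamma (b m) * Gamma (b (Suc m))"
      by (simp add: lessThan_Suc_atMost[symmetric])
    have pos: "0 < (\<Sum>j<m. b j) + b (Suc m)" using Suc.prems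
      by (intro add_nonneg_pos sum_nonneg) (auto intro: less_imp_le)
    have g0: "Gamma ((\<Sum>j<m. b j) + b (Suc m)) \<noteq> 0" using Gamma_real_pos[OF pos] by simp
    have nn: "0 \<le> (\<Prod>j<m. Gamma (b j)) * Gamma (b (Suc m)) / Gamma ((\<Sum>j<m. b j) + b (Suc m))"
      using Suc.prems pos
      by (intro divide_nonneg_nonneg mult_nonneg_nonneg prod_nonneg) (auto intro!: less_imp_le Gamma_real_pos)
    have nn2: "0 \<le> s powr (b m + ((\<Sum>j<m. b j) + b (Suc m)) - 1) * Beta (b m) ((\<Sum>j<m. b j) + b (Suc m))"
    proof -
      have bm: "0 < b m" by (simp add: Suc.prems)
      have "0 < Beta (b m) ((\<Sum>j<m. b j) + b (Suc m))" unfolding Beta_def using bm pos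
        by (intro divide_pos_pos mult_pos_pos Gamma_real_pos) (auto intro: add_pos_pos)
      then show ?thesis by simp
    qed
    show ?thesis
      unfolding s1 s2 p1 p2 ennreal_mult[OF nn2 nn, symmetric]
      using g0 by (simp add: Beta_def algebra_simps)
  qed
  finally show ?case .
qed

lemma lift_meas[measurable]:
  "simplex_lift K \<in> PiM {..<m} (\<lambda>_. lborel) \<rightarrow>\<^sub>M PiM {..<K} (\<lambda>_. borel :: real measure)"
proof -
  note comp_meas_lborel[measurable]
  show ?thesis unfolding simplex_lift_def
    by (intro measurable_restrict) measurable
qed

lemma dens_meas[measurable]:
  "(\<lambda>q. ennreal (dirichlet_density K \<beta> q)) \<in> borel_measurable (PiM {..<K} (\<lambda>_. borel :: real measure))"
proof -
  note comp_meas_borel[measurable]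
  show ?thesis unfolding dirichlet_density_def by measurable
qed

lemma pow_meas[measurable]:
  "(\<lambda>q. ennreal ((q k)^a)) \<in> borel_measurable (PiM I (\<lambda>_. borel :: real measure))"
proof -
  note comp_meas_borel[measurable]
  show ?thesis by measurable
qed

lemma dir_nn_integral:
  assumes [measurable]: "g \<in> borel_measurable (PiM {..<K} (\<lambda>_. borel :: real measure))"
  shows "(\<integral>\<^sup>+q. g q \<partial>dirichlet K \<beta>) = (\<integral>\<^sup>+q'. ennreal (dirichlet_density K \<beta> (simplex_lift K q')) * g (simplex_lift K q') \<partial>PiM {..<K-1} (\<lambda>_. lborel))"
  unfolding dirichlet_def
  by (subst nn_integral_distr) (simp_all add: nn_integral_density)

lemma dir_moment:
  assumes K: "K = Suc m" and pos: "\<And>k. k < K \<Longrightarrow> 0 < \<beta> k" and k: "k < K"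
  shows "(\<integral>\<^sup>+q. ennreal ((q k)^a) \<partial>dirichlet K \<beta>)
       = ennreal (Gamma (\<Sum>j<K. \<beta> j) / Gamma ((\<Sum>j<K. \<beta> j) + a) * (Gamma (\<beta> k + a) / Gamma (\<beta> k)))"
proof -
  define \<beta>' where "\<beta>' = \<beta>(k := \<beta> k + a)"
  define C where "C = Gamma (\<Sum>j<K. \<beta> j) / (\<Prod>j<K. Gamma (\<beta> j))"
  have Cnn: "0 \<le> C" unfolding C_def using pos
    by (intro divide_nonneg_nonneg prod_nonneg less_imp_le Gamma_real_pos sum_pos) (auto simp: K)
  have pt: "ennreal (dirichlet_density K \<beta> (simplex_lift K q')) * ennreal ((simplex_lift K q' k)^a)
      = ennreal C * ennreal (indicator (ssimp m 1) q' * ((\<Prod>j<m. q' j powr (\<beta>' j - 1)) *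
       (1 - (\<Sum>j<m. q' j)) powr (\<beta>' m - 1)))" for q'
  proof -
    define l where "l = simplex_lift K q'"
    have l: "\<And>j. j < K \<Longrightarrow> l j = (if j < m then q' j else 1 - (\<Sum>j<m. q' j))"
      by (simp add: l_def simplex_lift_def K)
    have I: "(\<forall>j<K. 0 < l j) = (q' \<in> ssimp m 1)"
      by (auto simp: l ssimp_def K less_Suc_eq)
    show ?thesis
    proof (cases "q' \<in> ssimp m 1")
      case False
      then show ?thesis using I by (auto simp: dirichlet_density_def l_def[symmetric])
    next
      case True
      then have lpos: "\<And>j. j < K \<Longrightarrow> 0 < l j" using I by auto
      have "(\<Prod>j<K. l j powr (\<beta> j - 1)) * (l k)^a = (\<Prod>j<K. l j powr (\<beta>' j - 1))"
      proof -
        have "(\<Prod>j<K. l j powr (\<beta>' j - 1)) = l k powr (\<beta>' k - 1) * (\<Prod>j\<in>{..<K}-{k}. l j powr (\<beta>' j - 1))"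
          using k by (subst prod.remove[of _ k]) auto
        also have "(\<Prod>j\<in>{..<K}-{k}. l j powr (\<beta>' j - 1)) = (\<Prod>j\<in>{..<K}-{k}. l j powr (\<beta> j - 1))"
          by (intro prod.cong) (auto simp: \<beta>'_def)
        also have "l k powr (\<beta>' k - 1) = l k powr (\<beta> k - 1) * (l k)^a"
          using lpos[OF k] by (simp add: \<beta>'_def powr_realpow[symmetric] powr_add[symmetric] algebra_simps)
        also have "(\<Prod>j<K. l j powr (\<beta> j - 1)) = l k powr (\<beta> k - 1) * (\<Prod>j\<in>{..<K}-{k}. l j powr (\<beta> j - 1))"
          using k by (subst prod.remove[of _ k]) auto
        ultimately show ?thesis by (simp add: mult_ac)
      qed
      also have "(\<Prod>j<K. l j powr (\<beta>' j - 1)) = (\<Prod>j<m. q' j powr (\<beta>' j - 1)) * (1 - (\<Sum>j<m. q' j)) powr (\<beta>' m - 1)"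
        unfolding K prod.lessThan_Suc using l by (simp add: K)
      finally have "(\<Prod>j<K. l j powr (\<beta> j - 1)) * (l k)^a = (\<Prod>j<m. q' j powr (\<beta>' j - 1)) * (1 - (\<Sum>j<m. q' j)) powr (\<beta>' m - 1)" .
      moreover have "0 \<le> (\<Prod>j<K. l j powr (\<beta> j - 1))" by (intro prod_nonneg) auto
      moreover have "0 \<le> (l k)^a" using lpos[OF k] by simp
      ultimately show ?thesis using True lpos I Cnn
        by (simp add: dirichlet_density_def l_def[symmetric] C_def[symmetric] ennreal_mult'[symmetric] ennreal_mult[symmetric] mult_ac)
    qed
  qed
  have "(\<integral>\<^sup>+q. ennreal ((q k)^a) \<partial>dirichlet K \<beta>)
      = (\<integral>\<^sup>+q'. ennreal C * ennreal (indicator (ssimp m 1) q' * ((\<Prod>j<m. q' j powr (\<beta>' j - 1)) *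
       (1 - (\<Sum>j<m. q' j)) powr (\<beta>' m - 1))) \<partial>PiM {..<m} (\<lambda>_. lborel))"
    by (subst dir_nn_integral) (simp, simp only: pt, simp add: K)
  also have "\<dots> = ennreal C * dint m \<beta>' 1"
    unfolding dint_def by (subst nn_integral_cmult) auto
  also have "dint m \<beta>' 1 = ennreal ((\<Prod>j\<le>m. Gamma (\<beta>' j)) / Gamma (\<Sum>j\<le>m. \<beta>' j))"
    using pos by (subst dint_eq) (auto simp: \<beta>'_def K intro: add_pos_nonneg)
  also have "(\<Sum>j\<le>m. \<beta>' j) = (\<Sum>j<K. \<beta> j) + a"
  proof -
    have "(\<Sum>j\<le>m. \<beta>' j) = (\<Sum>j<K. \<beta>' j)" by (simp add: K lessThan_Suc_atMost)
    also have "\<dots> = (\<Sum>j<K. \<beta> j + (if j = k then real a else 0))"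
      by (intro sum.cong) (auto simp: \<beta>'_def)
    also have "\<dots> = (\<Sum>j<K. \<beta> j) + a" using k by (simp add: sum.distrib)
    finally show ?thesis .
  qed
  also have "(\<Prod>j\<le>m. Gamma (\<beta>' j)) = (\<Prod>j<K. Gamma (\<beta> j)) * (Gamma (\<beta> k + a) / Gamma (\<beta> k))"
  proof -
    have gk: "Gamma (\<beta> k) > 0" using pos k by (intro Gamma_real_pos) auto
    have "(\<Prod>j\<le>m. Gamma (\<beta>' j)) = (\<Prod>j<K. Gamma (\<beta>' j))" by (simp add: K lessThan_Suc_atMost)
    also have "\<dots> = Gamma (\<beta>' k) * (\<Prod>j\<in>{..<K}-{k}. Gamma (\<beta>' j))"
      using k by (subst prod.remove[of _ k]) auto
    also have "(\<Prod>j\<in>{..<K}-{k}. Gamma (\<beta>' j)) = (\<Prod>j\<in>{..<K}-{k}. Gamma (\<beta> j))"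
      by (intro prod.cong) (auto simp: \<beta>'_def)
    also have "(\<Prod>j<K. Gamma (\<beta> j)) = Gamma (\<beta> k) * (\<Prod>j\<in>{..<K}-{k}. Gamma (\<beta> j))"
      using k by (subst prod.remove[of _ k]) auto
    ultimately show ?thesis using gk by (simp add: \<beta>'_def field_simps)
  qed
  also have "ennreal C * ennreal ((\<Prod>j<K. Gamma (\<beta> j)) * (Gamma (\<beta> k + a) / Gamma (\<beta> k)) / Gamma ((\<Sum>j<K. \<beta> j) + a))
     = ennreal (Gamma (\<Sum>j<K. \<beta> j) / Gamma ((\<Sum>j<K. \<beta> j) + a) * (Gamma (\<beta> k + a) / Gamma (\<beta> k)))"
  proof -
    define P where "P = (\<Prod>j<K. Gamma (\<beta> j))"
    have "P > 0" unfolding P_def using pos by (intro prod_pos Gamma_real_pos) auto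
    then have "P \<noteq> 0" by simp
    then have "C * (P * (Gamma (\<beta> k + a) / Gamma (\<beta> k)) / Gamma ((\<Sum>j<K. \<beta> j) + a))
       = Gamma (\<Sum>j<K. \<beta> j) / Gamma ((\<Sum>j<K. \<beta> j) + a) * (Gamma (\<beta> k + a) / Gamma (\<beta> k))"
      unfolding C_def P_def[symmetric] by (simp add: field_simps)
    then show ?thesis using Cnn unfolding P_def[symmetric] by (simp add: ennreal_mult'[symmetric])
  qed
  finally show ?thesis .
qed

lemma Gamma_plus1_pos: "0 < (x::real) \<Longrightarrow> Gamma (x + 1) = x * Gamma x"
  by (rule Gamma_plus1) (auto elim!: nonpos_Ints_cases)

lemma Gamma_plus1_pos': "0 < (x::real) \<Longrightarrow> Gamma (1 + x) = x * Gamma x"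
  using Gamma_plus1_pos[of x] by (simp add: add.commute)

lemma dir_moments:
  assumes K: "1 \<le> K" and pos: "\<And>k. k < K \<Longrightarrow> 0 < \<beta> k" and k: "k < K"
  defines "B \<equiv> (\<Sum>j<K. \<beta> j)"
  shows "emeasure (dirichlet K \<beta>) (space (dirichlet K \<beta>)) = 1"
    and "(\<integral>\<^sup>+q. ennreal (q k) \<partial>dirichlet K \<beta>) = ennreal (\<beta> k / B)"
    and "(\<integral>\<^sup>+q. ennreal ((q k)^2) \<partial>dirichlet K \<beta>) = ennreal (\<beta> k * (\<beta> k + 1) / (B * (B + 1)))"
proof -
  obtain m where m: "K = Suc m" using K by (cases K) auto
  have Bpos: "0 < B" unfolding B_def using pos K by (intro sum_pos) (auto simp: lessThan_empty_iff)
  have bk: "0 < \<beta> k" using pos k by auto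
  have gB0: "Gamma B > 0" "Gamma (\<beta> k) > 0" using Bpos bk by (auto intro: Gamma_real_pos)
  then have gB: "Gamma B \<noteq> 0" "Gamma (\<beta> k) \<noteq> 0" by auto
  have "(\<integral>\<^sup>+q. ennreal ((q k)^0) \<partial>dirichlet K \<beta>) = 1"
    using dir_moment[where K=K and m=m and \<beta>=\<beta> and k=k and a=0, OF m pos k] gB by (simp add: B_def[symmetric])
  then show "emeasure (dirichlet K \<beta>) (space (dirichlet K \<beta>)) = 1"
    by (simp add: nn_integral_const)
  have "(\<integral>\<^sup>+q. ennreal ((q k)^1) \<partial>dirichlet K \<beta>) = ennreal (\<beta> k / B)"
    using dir_moment[where K=K and m=m and \<beta>=\<beta> and k=k and a=1, OF m pos k] gB Bpos bk by (simp add: B_def[symmetric] Gamma_plus1_pos' Gamma_plus1_pos field_simps)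
  then show "(\<integral>\<^sup>+q. ennreal (q k) \<partial>dirichlet K \<beta>) = ennreal (\<beta> k / B)" by simp
  have g2: "Gamma (2 + x) = (x + 1) * x * Gamma x" if "0 < x" for x :: real
  proof -
    have "Gamma (2 + x) = Gamma ((x + 1) + 1)" by (simp add: add_ac)
    also have "\<dots> = (x + 1) * Gamma (x + 1)" using that by (intro Gamma_plus1_pos) auto
    finally show ?thesis using that by (simp add: Gamma_plus1_pos)
  qed
  have g2': "Gamma (x + 2) = (x + 1) * x * Gamma x" if "0 < x" for x :: real
    using g2[OF that] by (simp add: add.commute)
  have e: "Gamma B / Gamma (B + real 2) * (Gamma (\<beta> k + real 2) / Gamma (\<beta> k)) = \<beta> k * (\<beta> k + 1) / (B * (B + 1))"
  proof -
    have "Gamma B / Gamma (B + real 2) * (Gamma (\<beta> k + real 2) / Gamma (\<beta> k))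
        = Gamma B / ((B + 1) * B * Gamma B) * ((\<beta> k + 1) * \<beta> k * Gamma (\<beta> k) / Gamma (\<beta> k))"
      using g2'[OF Bpos] g2'[OF bk] by simp
    also have "\<dots> = \<beta> k * (\<beta> k + 1) / (B * (B + 1))"
    proof -
      have "B + 1 \<noteq> 0" using Bpos by simp
      then show ?thesis using gB Bpos by (simp add: divide_simps)
    qed
    finally show ?thesis .
  qed
  show "(\<integral>\<^sup>+q. ennreal ((q k)^2) \<partial>dirichlet K \<beta>) = ennreal (\<beta> k * (\<beta> k + 1) / (B * (B + 1)))"
    using dir_moment[where K=K and m=m and \<beta>=\<beta> and k=k and a=2, OF m pos k] unfolding B_def[symmetric] e[symmetric] by simp
qed

lemma AE_dir_pos:
  assumes K: "1 \<le> K"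
  shows "AE q in dirichlet K \<beta>. \<forall>k<K. 0 < q k"
proof -
  note comp_meas_borel[measurable]
  have "AE q' in density (PiM {..<K - 1} (\<lambda>_. lborel)) (\<lambda>q'. ennreal (dirichlet_density K \<beta> (simplex_lift K q'))).
          \<forall>k<K. 0 < simplex_lift K q' k"
    by (subst AE_density) (auto simp: dirichlet_density_def split: if_splits)
  then show ?thesis unfolding dirichlet_def
    by (subst AE_distr_iff) auto
qed

lemma vdist_meas[measurable]: "(\<lambda>q. vdist K q c) \<in> borel_measurable (PiM I (\<lambda>_. borel :: real measure))"
proof -
  note comp_meas_borel[measurable]
  show ?thesis unfolding vdist_def by measurable
qed

lemma sets_dir[simp, measurable_cong]: "sets (dirichlet K \<beta>) = sets (PiM {..<K} (\<lambda>_. borel))"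
  by (simp add: dirichlet_def)

lemma space_dir[simp]: "space (dirichlet K \<beta>) = space (PiM {..<K} (\<lambda>_. borel))"
  by (simp add: dirichlet_def)

lemma dir_sq_moment:
  assumes K: "1 \<le> K" and pos: "\<And>k. k < K \<Longrightarrow> 0 < \<beta> k" and k: "k < K" and c: "0 \<le> c"
  defines "B \<equiv> (\<Sum>j<K. \<beta> j)"
  shows "(\<integral>\<^sup>+q. ennreal ((q k - c)^2) \<partial>dirichlet K \<beta>)
     = ennreal ((\<beta> k / B) * (1 - \<beta> k / B) / (B + 1) + (\<beta> k / B - c)^2)"
proof -
  let ?D = "dirichlet K \<beta>"
  note comp_meas_borel[measurable]
  define m1 where "m1 = \<beta> k / B"
  define m2 where "m2 = \<beta> k * (\<beta> k + 1) / (B * (B + 1))"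
  note mom = dir_moments[where K=K and \<beta>=\<beta> and k=k, OF K pos k, unfolded B_def[symmetric]]
  have Bpos: "0 < B" unfolding B_def using pos K by (intro sum_pos) (auto simp: lessThan_empty_iff)
  have bk: "0 < \<beta> k" using pos k by auto
  have m1nn: "0 \<le> m1" using Bpos bk by (simp add: m1_def)
  have m2nn: "0 \<le> m2" using Bpos bk unfolding m2_def by (intro divide_nonneg_nonneg mult_nonneg_nonneg) auto
  have AE: "AE q in ?D. ennreal ((q k - c)^2) + ennreal (2*c) * ennreal (q k) = ennreal ((q k)^2) + ennreal (c^2)"
    using AE_dir_pos[OF K, of \<beta>]
  proof eventually_elim
    case (elim q)
    then have "0 < q k" using k by auto
    then show ?case using c
      by (simp add: ennreal_mult'[symmetric] ennreal_plus[symmetric] del: ennreal_plus) (simp add: power2_eq_square algebra_simps)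
  qed
  have "(\<integral>\<^sup>+q. ennreal ((q k - c)^2) \<partial>?D) + ennreal (2*c) * ennreal m1
      = (\<integral>\<^sup>+q. ennreal ((q k - c)^2) + ennreal (2*c) * ennreal (q k) \<partial>?D)"
    using mom(2) by (subst nn_integral_add) (auto simp: nn_integral_cmult m1_def)
  also have "\<dots> = (\<integral>\<^sup>+q. ennreal ((q k)^2) + ennreal (c^2) \<partial>?D)"
    by (rule nn_integral_cong_AE[OF AE])
  also have "\<dots> = ennreal m2 + ennreal (c^2)"
    using mom(1,3) by (subst nn_integral_add) (auto simp: m2_def nn_integral_const)
  finally have eq: "(\<integral>\<^sup>+q. ennreal ((q k - c)^2) \<partial>?D) + ennreal (2*c*m1) = ennreal (m2 + c^2)"
    using c m1nn m2nn by (simp add: ennreal_mult ennreal_plus[symmetric] del: ennreal_plus)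
  define X where "X = (\<integral>\<^sup>+q. ennreal ((q k - c)^2) \<partial>?D)"
  have "X \<noteq> top"
  proof
    assume "X = top"
    then show False using eq unfolding X_def[symmetric] by simp
  qed
  then obtain x where x: "X = ennreal x" "0 \<le> x" by (cases X) auto
  have "ennreal (x + 2*c*m1) = ennreal (m2 + c^2)" using eq x c m1nn unfolding X_def[symmetric]
    by (simp add: ennreal_plus[symmetric] del: ennreal_plus)
  then have "x + 2*c*m1 = m2 + c^2"
    using x c m1nn m2nn by (subst (asm) ennreal_inj) (auto intro: add_nonneg_nonneg)
  then have "x = m2 - 2*c*m1 + c^2" by simp
  also have "\<dots> = (\<beta> k / B) * (1 - \<beta> k / B) / (B + 1) + (\<beta> k / B - c)^2"
  proof -
    have B1: "B + 1 \<noteq> 0" "B \<noteq> 0" using Bpos by auto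
    have e1: "m2 = m1 * ((m1*B + 1)/(B+1))" using B1 by (simp add: m2_def m1_def)
    have e2: "m1 * (1 - m1) / (B + 1) + m1^2 = m1 * ((m1*B + 1)/(B+1))"
      using B1 by (simp add: field_simps power2_eq_square)
    have "m2 = m1 * (1 - m1) / (B + 1) + m1^2" using e1 e2 by simp
    then show ?thesis unfolding m1_def[symmetric] by (simp add: power2_eq_square algebra_simps)
  qed
  finally show ?thesis using x unfolding X_def by simp
qed

lemma dir_cheb:
  assumes K: "1 \<le> K" and pos: "\<And>k. k < K \<Longrightarrow> 0 < \<beta> k" and r: "0 < r" and c: "\<And>k. 0 \<le> c k"
  defines "B \<equiv> (\<Sum>j<K. \<beta> j)"
  shows "measure (dirichlet K \<beta>) {q \<in> space (PiM {..<K} (\<lambda>_. borel)). r < vdist K q c}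
     \<le> (real K / (B + 1) + (\<Sum>k<K. (\<beta> k / B - c k)^2)) / r^2"
proof -
  let ?D = "dirichlet K \<beta>"
  let ?A = "{q \<in> space (PiM {..<K} (\<lambda>_. borel)). r < vdist K q c}"
  note comp_meas_borel[measurable]
  have Bpos: "0 < B" unfolding B_def using pos K by (intro sum_pos) (auto simp: lessThan_empty_iff)
  define v where "v k = (\<beta> k / B) * (1 - \<beta> k / B) / (B + 1) + (\<beta> k / B - c k)^2" for k
  have m01: "0 \<le> \<beta> k / B \<and> \<beta> k / B \<le> 1" if "k < K" for k
  proof -
    have "\<beta> k \<le> B" unfolding B_def using that pos
      by (intro member_le_sum) (auto intro: less_imp_le)
    then show ?thesis using that pos[OF that] Bpos by auto
  qed
  have vnn: "0 \<le> v k" if "k < K" for k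
    using m01[OF that] Bpos pos[OF that] unfolding v_def by (intro add_nonneg_nonneg divide_nonneg_nonneg mult_nonneg_nonneg) auto
  have A: "?A \<in> sets ?D" by simp
  have "emeasure ?D ?A = (\<integral>\<^sup>+q. indicator ?A q \<partial>?D)" using A by simp
  also have "\<dots> \<le> (\<integral>\<^sup>+q. ennreal (1 / r^2) * (\<Sum>k<K. ennreal ((q k - c k)^2)) \<partial>?D)"
  proof (intro nn_integral_mono)
    fix q
    show "indicator ?A q \<le> ennreal (1 / r^2) * (\<Sum>k<K. ennreal ((q k - c k)^2))"
    proof (cases "q \<in> ?A")
      case True
      then have "r < sqrt (\<Sum>k<K. (q k - c k)^2)" by (simp add: vdist_def)
      then have "r^2 < (\<Sum>k<K. (q k - c k)^2)" using r
        by (metis abs_of_pos real_sqrt_abs real_sqrt_less_iff)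
      then have "1 \<le> 1 / r^2 * (\<Sum>k<K. (q k - c k)^2)" using r by (simp add: field_simps)
      then show ?thesis using True r
        by (simp add: ennreal_mult'[symmetric] sum_nonneg ennreal_1[symmetric] del: ennreal_1)
    qed simp
  qed
  also have "\<dots> = ennreal (1 / r^2) * (\<Sum>k<K. (\<integral>\<^sup>+q. ennreal ((q k - c k)^2) \<partial>?D))"
    by (subst nn_integral_cmult, measurable, subst nn_integral_sum) auto
  also have "\<dots> = ennreal (1 / r^2) * (\<Sum>k<K. ennreal (v k))"
    using dir_sq_moment[OF K pos _ c] by (simp add: v_def B_def)
  also have "\<dots> = ennreal ((\<Sum>k<K. v k) / r^2)"
  proof -
    have "(\<Sum>k<K. ennreal (v k)) = ennreal (\<Sum>k<K. v k)" using vnn by (intro sum_ennreal) auto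
    moreover have "0 \<le> (\<Sum>k<K. v k)" using vnn by (intro sum_nonneg) auto
    ultimately show ?thesis by (simp add: ennreal_mult'[symmetric])
  qed
  finally have le: "emeasure ?D ?A \<le> ennreal ((\<Sum>k<K. v k) / r^2)" .
  have "measure ?D ?A \<le> (\<Sum>k<K. v k) / r^2"
  proof -
    have "measure ?D ?A \<le> enn2real (ennreal ((\<Sum>k<K. v k) / r^2))"
      unfolding measure_def by (rule enn2real_mono[OF le]) simp
    also have "\<dots> = (\<Sum>k<K. v k) / r^2"
    proof -
      have "0 \<le> (\<Sum>k<K. v k)" using vnn by (intro sum_nonneg) auto
      then show ?thesis by simp
    qed
    finally show ?thesis .
  qed
  also have "\<dots> \<le> (real K / (B + 1) + (\<Sum>k<K. (\<beta> k / B - c k)^2)) / r^2"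
  proof -
    have "(\<Sum>k<K. v k) = (\<Sum>k<K. (\<beta> k / B) * (1 - \<beta> k / B) / (B + 1)) + (\<Sum>k<K. (\<beta> k / B - c k)^2)"
      by (simp add: v_def sum.distrib)
    also have "(\<Sum>k<K. (\<beta> k / B) * (1 - \<beta> k / B) / (B + 1)) \<le> (\<Sum>k<K. 1 / (B + 1))"
    proof (intro sum_mono)
      fix k assume "k \<in> {..<K}"
      then have "(\<beta> k / B) * (1 - \<beta> k / B) \<le> 1" using m01[of k]
        by (intro mult_le_one) auto
      then show "(\<beta> k / B) * (1 - \<beta> k / B) / (B + 1) \<le> 1 / (B + 1)" using Bpos
        by (intro divide_right_mono) auto
    qed
    finally show ?thesis using r by (intro divide_right_mono) auto
  qed
  finally show ?thesis .
qed

lemma vdist_L2: "vdist K u v = L2_set (\<lambda>k. u k - v k) {..<K}"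
  by (simp add: vdist_def L2_set_def)

lemma vdist_triangle: "vdist K u w \<le> vdist K u v + vdist K v w"
proof -
  have "vdist K u w = L2_set (\<lambda>k. (u k - v k) + (v k - w k)) {..<K}" by (simp add: vdist_L2)
  also have "\<dots> \<le> vdist K u v + vdist K v w" unfolding vdist_L2 by (rule L2_set_triangle_ineq)
  finally show ?thesis .
qed

lemma vdist_sym: "vdist K u v = vdist K v u"
  unfolding vdist_def by (simp add: power2_commute)

lemma vdist_coord: "k < K \<Longrightarrow> \<bar>u k - v k\<bar> \<le> vdist K u v"
proof -
  assume k: "k < K"
  have "(u k - v k)^2 \<le> (\<Sum>j<K. (u j - v j)^2)"
    using k by (intro member_le_sum) auto
  then have "sqrt ((u k - v k)^2) \<le> vdist K u v" unfolding vdist_def by (rule real_sqrt_le_mono)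
  then show ?thesis by simp
qed

lemma vdist_le_coord:
  assumes "\<And>k. k < K \<Longrightarrow> \<bar>u k - v k\<bar> \<le> t" "0 \<le> t"
  shows "(vdist K u v)^2 \<le> real K * t^2"
proof -
  have "(vdist K u v)^2 = (\<Sum>j<K. (u j - v j)^2)" unfolding vdist_def
    by (simp add: sum_nonneg)
  also have "\<dots> \<le> (\<Sum>j<K. t^2)"
  proof (intro sum_mono)
    fix j assume "j \<in> {..<K}"
    then have "\<bar>u j - v j\<bar> \<le> t" using assms by auto
    then have "\<bar>u j - v j\<bar>^2 \<le> t^2" by (intro power_mono) auto
    then show "(u j - v j)^2 \<le> t^2" by simp
  qed
  finally show ?thesis by simp
qed

lemma mean_bound:
  fixes \<alpha> NN \<eta> :: "nat \<Rightarrow> real"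
  assumes K: "1 \<le> K" and apos: "\<And>k. k < K \<Longrightarrow> 0 < \<alpha> k"
    and enn: "\<And>k. 0 \<le> \<eta> k" and esum: "(\<Sum>k<K. \<eta> k) = 1"
    and NNnn: "\<And>k. 0 \<le> NN k" and vd: "vdist K NN \<eta> \<le> \<delta>" and Kd: "real K * \<delta> \<le> 1/2"
    and s: "0 \<le> s"
  defines "B \<equiv> (\<Sum>k<K. \<alpha> k + s * NN k)" and "a0 \<equiv> (\<Sum>k<K. \<alpha> k)"
  shows "s / 2 \<le> B" "0 < B"
    and "\<And>k. k < K \<Longrightarrow> \<bar>(\<alpha> k + s * NN k) / B - \<eta> k\<bar> \<le> 2 * a0 / B + (2 + 2 * real K) * \<delta>"
proof -
  define S where "S = (\<Sum>k<K. NN k)"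
  have a0pos: "0 < a0" unfolding a0_def using apos K by (intro sum_pos) (auto simp: lessThan_empty_iff)
  have cd: "\<bar>NN k - \<eta> k\<bar> \<le> \<delta>" if "k < K" for k using vdist_coord[OF that, of NN \<eta>] vd by simp
  have "\<bar>S - 1\<bar> = \<bar>\<Sum>k<K. NN k - \<eta> k\<bar>" by (simp add: S_def esum sum_subtractf)
  also have "\<dots> \<le> (\<Sum>k<K. \<bar>NN k - \<eta> k\<bar>)" by (rule sum_abs)
  also have "\<dots> \<le> (\<Sum>k<K. \<delta>)" using cd by (intro sum_mono) auto
  finally have S1: "\<bar>S - 1\<bar> \<le> real K * \<delta>" by simp
  then have Sh: "1/2 \<le> S" using Kd by linarith
  have BS: "B = a0 + s * S" by (simp add: B_def a0_def S_def sum.distrib sum_distrib_left)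
  have "s * (1/2) \<le> s * S" using Sh s by (rule mult_left_mono)
  then show sB: "s / 2 \<le> B" using BS a0pos by simp
  show Bpos: "0 < B" using sB s a0pos BS \<open>s * (1/2) \<le> s * S\<close> by simp
  fix k assume k: "k < K"
  have ek: "\<eta> k \<le> 1"
  proof -
    have "\<eta> k \<le> (\<Sum>k<K. \<eta> k)" using k enn by (intro member_le_sum) auto
    then show ?thesis using esum by simp
  qed
  have ak: "\<alpha> k \<le> a0" unfolding a0_def using k apos by (intro member_le_sum) (auto intro: less_imp_le)
  have num: "(\<alpha> k + s * NN k) - \<eta> k * B = (\<alpha> k - \<eta> k * a0) + s * (NN k - \<eta> k) + s * \<eta> k * (1 - S)"
    unfolding BS by (simp add: algebra_simps)
  have "\<bar>(\<alpha> k + s * NN k) - \<eta> k * B\<bar> \<le> \<bar>\<alpha> k - \<eta> k * a0\<bar> + s * \<bar>NN k - \<eta> k\<bar> + s * \<eta> k * \<bar>1 - S\<bar>"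
  proof -
    have e1: "\<bar>s * (NN k - \<eta> k)\<bar> = s * \<bar>NN k - \<eta> k\<bar>" using s by (simp add: abs_mult)
    have e2: "\<bar>s * \<eta> k * (1 - S)\<bar> = s * \<eta> k * \<bar>1 - S\<bar>" using s enn[of k] by (simp add: abs_mult)
    show ?thesis unfolding num
      using abs_triangle_ineq[of "(\<alpha> k - \<eta> k * a0) + s * (NN k - \<eta> k)" "s * \<eta> k * (1 - S)"]
        abs_triangle_ineq[of "\<alpha> k - \<eta> k * a0" "s * (NN k - \<eta> k)"] e1 e2 by linarith
  qed
  also have "\<dots> \<le> 2 * a0 + s * \<delta> + s * (real K * \<delta>)"
  proof -
    have "\<bar>\<alpha> k - \<eta> k * a0\<bar> \<le> 2 * a0"
    proof -
      have "\<eta> k * a0 \<le> a0" using ek a0pos by (simp add: mult_left_le_one_le)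
      moreover have "0 \<le> \<eta> k * a0" using enn[of k] a0pos by simp
      ultimately show ?thesis using ak apos[OF k] by (simp only: abs_le_iff) linarith
    qed
    moreover have "s * \<bar>NN k - \<eta> k\<bar> \<le> s * \<delta>" using cd[OF k] s by (intro mult_left_mono) auto
    moreover have "s * \<eta> k * \<bar>1 - S\<bar> \<le> s * (real K * \<delta>)"
    proof -
      have "\<eta> k * \<bar>1 - S\<bar> \<le> 1 * (real K * \<delta>)" using ek enn[of k] S1
        by (intro mult_mono) (auto simp: abs_minus_commute)
      then show ?thesis using s by (simp add: mult.assoc mult_left_mono)
    qed
    ultimately show ?thesis by linarith
  qed
  finally have nb: "\<bar>(\<alpha> k + s * NN k) - \<eta> k * B\<bar> \<le> 2 * a0 + s * ((1 + real K) * \<delta>)"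
    by (simp add: algebra_simps)
  have "\<bar>(\<alpha> k + s * NN k) / B - \<eta> k\<bar> = \<bar>(\<alpha> k + s * NN k) - \<eta> k * B\<bar> / B"
    using Bpos by (simp add: field_simps)
  also have "\<dots> \<le> (2 * a0 + s * ((1 + real K) * \<delta>)) / B"
    using nb Bpos by (intro divide_right_mono) auto
  also have "\<dots> = 2 * a0 / B + (s / B) * ((1 + real K) * \<delta>)" by (simp add: add_divide_distrib)
  also have "\<dots> \<le> 2 * a0 / B + 2 * ((1 + real K) * \<delta>)"
  proof -
    have "0 \<le> vdist K NN \<eta>" by (simp add: vdist_def sum_nonneg)
    then have d0: "0 \<le> \<delta>" using vd by linarith
    have "s / B \<le> 2" using sB Bpos by (simp add: field_simps)
    then show ?thesis using d0 by (intro add_left_mono mult_right_mono) auto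
  qed
  finally show "\<bar>(\<alpha> k + s * NN k) / B - \<eta> k\<bar> \<le> 2 * a0 / B + (2 + 2 * real K) * \<delta>"
    by (simp add: algebra_simps)
qed

lemma cond_bound:
  assumes M: "prob_space M" and sub: "subalgebra M F" and G: "G \<in> sets F"
    and P: "P \<in> measurable M N" and A: "A \<in> sets N"
    and ae: "AE \<omega> in M. real_cond_exp M F (indicator {\<omega>' \<in> space M. P \<omega>' \<in> A}) \<omega> = h \<omega>"
    and hb: "\<And>\<omega>. \<omega> \<in> G \<Longrightarrow> h \<omega> \<le> b"
  shows "measure M (G \<inter> {\<omega> \<in> space M. P \<omega> \<in> A}) \<le> b * measure M G"
proof -
  interpret prob_space M by (rule M)
  interpret finite_measure_subalgebra M F by standard (rule sub)
  let ?S = "{\<omega> \<in> space M. P \<omega> \<in> A}"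
  have S: "?S \<in> sets M" using P A by measurable
  have GM: "G \<in> sets M" using G sub by (auto simp: subalgebra_def)
  have intS: "integrable M (indicator ?S :: _ \<Rightarrow> real)" using S by (intro integrable_real_indicator) (auto simp: less_top[symmetric])
  have "measure M (G \<inter> ?S) = (\<integral>x. indicator G x * indicator ?S x \<partial>M)"
    using GM S by (simp add: indicator_inter_arith[symmetric] Int_commute)
  also have "\<dots> = (\<integral>x \<in> G. indicator ?S x \<partial>M)" by (simp add: set_lebesgue_integral_def)
  also have "\<dots> = (\<integral>x \<in> G. real_cond_exp M F (indicator ?S) x \<partial>M)"
    by (rule real_cond_exp_intA[OF intS G])
  also have "\<dots> = (\<integral>x. indicator G x * real_cond_exp M F (indicator ?S) x \<partial>M)"
    by (simp add: set_lebesgue_integral_def)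
  also have "\<dots> \<le> (\<integral>x. indicator G x * b \<partial>M)"
  proof (rule integral_mono_AE)
    show "integrable M (\<lambda>x. indicator G x * real_cond_exp M F (indicator ?S) x)"
      using integrable_mult_indicator[OF GM real_cond_exp_int(1)[OF intS]] by simp
    show "integrable M (\<lambda>x. indicator G x * b)" using GM by (auto simp: less_top[symmetric])
    show "AE x in M. indicator G x * real_cond_exp M F (indicator ?S) x \<le> indicator G x * b"
      using ae by eventually_elim (auto simp: indicator_def hb)
  qed
  also have "\<dots> = b * measure M G" using GM by simp
  finally show ?thesis .
qed

lemma data_sigma_facts:
  fixes X :: "nat \<Rightarrow> 'a \<Rightarrow> 'x::euclidean_space" and Y :: "nat \<Rightarrow> 'a \<Rightarrow> nat"
  assumes X_meas: "\<And>j. X j \<in> borel_measurable M" and Y_meas: "\<And>j. Y j \<in> measurable M (count_space UNIV)"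
  shows "subalgebra M (data_sigma M X Y n)"
    and "i < n \<Longrightarrow> X i \<in> borel_measurable (data_sigma M X Y n)"
proof -
  let ?N = "PiM {..<n} (\<lambda>_. (borel :: 'x measure) \<Otimes>\<^sub>M count_space UNIV)"
  let ?T = "\<lambda>\<omega>. \<lambda>j\<in>{..<n}. (X j \<omega>, Y j \<omega>)"
  have T: "?T \<in> measurable M ?N"
    by (intro measurable_restrict measurable_Pair X_meas Y_meas)
  then have Tf: "?T \<in> space M \<rightarrow> space ?N" by (rule measurable_space[THEN funcsetI]) 
  show "subalgebra M (data_sigma M X Y n)"
    unfolding subalgebra_def data_sigma_def
  proof
    show "space (vimage_algebra (space M) ?T ?N) = space M" by simp
    show "sets (vimage_algebra (space M) ?T ?N) \<subseteq> sets M"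
      unfolding sets_vimage_algebra2[OF Tf] using T by (auto intro: measurable_sets)
  qed
  assume i: "i < n"
  have T2: "?T \<in> measurable (data_sigma M X Y n) ?N"
    unfolding data_sigma_def by (rule measurable_vimage_algebra1[OF Tf])
  have "(\<lambda>x. fst (x i)) \<in> measurable ?N borel"
  proof (rule measurable_compose[of _ _ "borel \<Otimes>\<^sub>M count_space UNIV"])
    show "(\<lambda>x. x i) \<in> measurable ?N (borel \<Otimes>\<^sub>M count_space UNIV)"
      using measurable_component_singleton[of i "{..<n}" "\<lambda>_. (borel :: 'x measure) \<Otimes>\<^sub>M count_space UNIV"] i by simp
    show "fst \<in> measurable (borel \<Otimes>\<^sub>M count_space UNIV) borel" by (rule measurable_fst'') (rule measurable_ident_sets, simp)
  qed
  from measurable_comp[OF T2 this] have "(\<lambda>\<omega>. fst (?T \<omega> i)) \<in> borel_measurable (data_sigma M X Y n)"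
    by (simp add: comp_def)
  moreover have "(\<lambda>\<omega>. fst (?T \<omega> i)) = X i" using i by auto
  ultimately show "X i \<in> borel_measurable (data_sigma M X Y n)" by simp
qed

theorem theorem3p2:
  fixes M :: "'a measure"
    and X :: "nat \<Rightarrow> 'a \<Rightarrow> 'x::euclidean_space"
    and Y :: "nat \<Rightarrow> 'a \<Rightarrow> nat"
    and K :: nat
    and f :: "'x \<Rightarrow> real"
    and \<eta> :: "'x \<Rightarrow> nat \<Rightarrow> real"
    and \<alpha> :: "nat \<Rightarrow> real"
    and DE :: "nat \<Rightarrow> 'a \<Rightarrow> 'x \<Rightarrow> real"
    and NN :: "nat \<Rightarrow> 'a \<Rightarrow> 'x \<Rightarrow> nat \<Rightarrow> real"
    and p :: "nat \<Rightarrow> 'a \<Rightarrow> nat \<Rightarrow> real"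
    and i :: nat
  assumes M: "prob_space M"
    and K: "1 \<le> K"
    \<comment> \<open>the sample: i.i.d. pairs (X_j, Y_j) with joint law P*_{Y|X} P*_X\<close>
    and X_meas: "\<And>j. X j \<in> borel_measurable M"
    and Y_meas: "\<And>j. Y j \<in> measurable M (count_space UNIV)"
    and Y_range: "\<And>j \<omega>. \<omega> \<in> space M \<Longrightarrow> Y j \<omega> < K"
    and indep: "prob_space.indep_vars M (\<lambda>_. borel \<Otimes>\<^sub>M count_space UNIV)
                  (\<lambda>j \<omega>. (X j \<omega>, Y j \<omega>)) UNIV"
    and f_nonneg: "\<And>x. 0 \<le> f x"
    and X_density: "\<And>j. distributed M lborel (X j) (\<lambda>x. ennreal (f x))"
    and \<eta>_meas: "\<And>k. (\<lambda>x. \<eta> x k) \<in> borel_measurable lborel"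
    and \<eta>_nonneg: "\<And>x k. 0 \<le> \<eta> x k"
    and \<eta>_sum: "\<And>x. (\<Sum>k<K. \<eta> x k) = 1"
    and joint: "\<And>j A k. A \<in> sets lborel \<Longrightarrow> k < K \<Longrightarrow>
                  measure M {\<omega> \<in> space M. X j \<omega> \<in> A \<and> Y j \<omega> = k}
                  = (\<integral>x. indicator A x * \<eta> x k * f x \<partial>lborel)"
    \<comment> \<open>prior concentration alpha with positive entries\<close>
    and \<alpha>_pos: "\<And>k. k < K \<Longrightarrow> 0 < \<alpha> k"
    \<comment> \<open>estimators fitted on the data, with nonnegative outputs\<close>
    and DE_meas: "\<And>n. (\<lambda>(\<omega>, x). DE n \<omega> x) \<in> borel_measurable (data_sigma M X Y n \<Otimes>\<^sub>M borel)"
    and NN_meas: "\<And>n k. (\<lambda>(\<omega>, x). NN n \<omega> x k) \<in> borel_measurable (data_sigma M X Y n \<Otimes>\<^sub>M borel)"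
    and DE_nonneg: "\<And>n \<omega> x. 0 \<le> DE n \<omega> x"
    and NN_nonneg: "\<And>n \<omega> x k. 0 \<le> NN n \<omega> x k"
    \<comment> \<open>consistency of the estimators at X_i (convergence in probability)\<close>
    and DE_cons: "\<And>\<epsilon>. 0 < \<epsilon> \<Longrightarrow>
        (\<lambda>n. measure M {\<omega> \<in> space M. \<epsilon> < \<bar>DE n \<omega> (X i \<omega>) - f (X i \<omega>)\<bar>}) \<longlonglongrightarrow> 0"
    and NN_cons: "\<And>\<epsilon>. 0 < \<epsilon> \<Longrightarrow>
        (\<lambda>n. measure M {\<omega> \<in> space M. \<epsilon> < vdist K (NN n \<omega> (X i \<omega>)) (\<eta> (X i \<omega>))}) \<longlonglongrightarrow> 0"
    \<comment> \<open>p_n given X_{1:n}, Y_{1:n} is distributed as Dir(alpha + n DE(X_i) NN(X_i)), n > i\<close>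
    and p_meas: "\<And>n. p n \<in> measurable M (PiM {..<K} (\<lambda>_. borel))"
    and p_cond: "\<And>n A. i < n \<Longrightarrow> A \<in> sets (PiM {..<K} (\<lambda>_. borel)) \<Longrightarrow>
        AE \<omega> in M. real_cond_exp M (data_sigma M X Y n)
                       (indicator {\<omega>' \<in> space M. p n \<omega>' \<in> A}) \<omega>
                   = measure (dirichlet K (\<lambda>k. \<alpha> k + real n * DE n \<omega> (X i \<omega>) * NN n \<omega> (X i \<omega>) k)) A"
  shows "\<And>\<epsilon>. 0 < \<epsilon> \<Longrightarrow>
        (\<lambda>n. measure M {\<omega> \<in> space M. \<epsilon> < vdist K (p n \<omega>) (\<eta> (X i \<omega>))}) \<longlonglongrightarrow> 0"
proof -
  fix \<epsilon> :: real assume \<epsilon>: "0 < \<epsilon>"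
  interpret prob_space M by (rule M)
  define Z where "Z = X i"
  define r where "r = \<epsilon> / 2"
  have r: "0 < r" using \<epsilon> by (simp add: r_def)
  define a0 where "a0 = (\<Sum>k<K. \<alpha> k)"
  have a0pos: "0 < a0" unfolding a0_def using \<alpha>_pos K by (intro sum_pos) (auto simp: lessThan_empty_iff)
  have Kpos: "0 < real K" using K by simp
  note comp_meas_borel[measurable]
  have sub: "\<And>n. subalgebra M (data_sigma M X Y n)"
    using data_sigma_facts(1)[where X=X and Y=Y, OF X_meas Y_meas] by blast
  have ZF: "\<And>n. i < n \<Longrightarrow> Z \<in> borel_measurable (data_sigma M X Y n)"
    unfolding Z_def using data_sigma_facts(2)[where X=X and Y=Y, OF X_meas Y_meas] by blast
  have ZM[measurable]: "Z \<in> borel_measurable M" unfolding Z_def by (rule X_meas)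
  have fmeas[measurable]: "f \<in> borel_measurable borel"
  proof -
    have "(\<lambda>x. ennreal (f x)) \<in> borel_measurable borel"
      using distributed_borel_measurable[OF X_density[of i]] by simp
    then have "(\<lambda>x. enn2real (ennreal (f x))) \<in> borel_measurable borel" by measurable
    then show ?thesis using f_nonneg by simp
  qed
  have \<eta>meas[measurable]: "\<And>k. (\<lambda>x. \<eta> x k) \<in> borel_measurable borel" using \<eta>_meas by simp
  have DEF: "(\<lambda>\<omega>. DE n \<omega> (Z \<omega>)) \<in> borel_measurable (data_sigma M X Y n)" if "i < n" for n
  proof -
    have "(\<lambda>\<omega>. (\<omega>, Z \<omega>)) \<in> measurable (data_sigma M X Y n) (data_sigma M X Y n \<Otimes>\<^sub>M borel)"
      by (intro measurable_Pair measurable_ident_sets ZF[OF that]) simp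
    from measurable_comp[OF this DE_meas[of n]] show ?thesis by (simp add: comp_def)
  qed
  have NNF: "(\<lambda>\<omega>. NN n \<omega> (Z \<omega>) k) \<in> borel_measurable (data_sigma M X Y n)" if "i < n" for n k
  proof -
    have "(\<lambda>\<omega>. (\<omega>, Z \<omega>)) \<in> measurable (data_sigma M X Y n) (data_sigma M X Y n \<Otimes>\<^sub>M borel)"
      by (intro measurable_Pair measurable_ident_sets ZF[OF that]) simp
    from measurable_comp[OF this NN_meas[of n k]] show ?thesis by (simp add: comp_def)
  qed
  have \<eta>F: "(\<lambda>\<omega>. \<eta> (Z \<omega>) k) \<in> borel_measurable (data_sigma M X Y n)" if "i < n" for n k
    using ZF[OF that] by measurable
  have pk[measurable]: "(\<lambda>\<omega>. p n \<omega> k) \<in> borel_measurable M" for n k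
    using p_meas[of n] by measurable
  have vdp[measurable]: "(\<lambda>\<omega>. vdist K (p n \<omega>) (\<eta> (Z \<omega>))) \<in> borel_measurable M" for n
    unfolding vdist_def by measurable
  define E where "E n = {\<omega> \<in> space M. \<epsilon> < vdist K (p n \<omega>) (\<eta> (Z \<omega>))}" for n
  have EM: "E n \<in> sets M" for n unfolding E_def by measurable
  have main: "\<exists>n0. \<forall>n\<ge>n0. measure M (E n) < 4 * \<gamma>" if \<gamma>: "0 < \<gamma>" for \<gamma>
  proof -
    obtain \<tau> where \<tau>: "0 < \<tau>" "measure M {\<omega> \<in> space M. f (Z \<omega>) \<le> \<tau>} < \<gamma>"
    proof -
      define D where "D j = {\<omega> \<in> space M. f (Z \<omega>) \<le> 1 / real (Suc j)}" for j
      have Ds: "range D \<subseteq> sets M" unfolding D_def by auto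
      have Dd: "decseq D" unfolding decseq_def D_def
      proof (intro allI impI subsetI)
        fix m n :: nat and \<omega> assume mn: "m \<le> n" and w: "\<omega> \<in> {\<omega> \<in> space M. f (Z \<omega>) \<le> 1 / real (Suc n)}"
        have "1 / real (Suc n) \<le> 1 / real (Suc m)" using mn by (intro divide_left_mono) auto
        then show "\<omega> \<in> {\<omega> \<in> space M. f (Z \<omega>) \<le> 1 / real (Suc m)}" using w by auto
      qed
      have DI: "(\<Inter>j. D j) = Z -` {x. f x = 0} \<inter> space M"
      proof (intro equalityI subsetI)
        fix \<omega> assume w: "\<omega> \<in> (\<Inter>j. D j)"
        then have "\<omega> \<in> space M" by (auto simp: D_def)
        moreover have "f (Z \<omega>) = 0"
        proof (rule ccontr)
          assume "f (Z \<omega>) \<noteq> 0"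
          then have "0 < f (Z \<omega>)" using f_nonneg[of "Z \<omega>"] by simp
          then obtain j where "inverse (real (Suc j)) < f (Z \<omega>)" using reals_Archimedean by blast
          moreover have "f (Z \<omega>) \<le> 1 / real (Suc j)" using w by (auto simp: D_def)
          ultimately show False by (simp add: inverse_eq_divide)
        qed
        ultimately show "\<omega> \<in> Z -` {x. f x = 0} \<inter> space M" by simp
      qed (auto simp: D_def)
      have "emeasure M (Z -` {x. f x = 0} \<inter> space M) = (\<integral>\<^sup>+x. ennreal (f x) * indicator {x. f x = 0} x \<partial>lborel)"
        unfolding Z_def by (rule distributed_emeasure[OF X_density[of i]]) simp
      also have "\<dots> = (\<integral>\<^sup>+x. 0 \<partial>lborel)"
      proof -
        have "(\<lambda>x. ennreal (f x) * indicator {x. f x = 0} x) = (\<lambda>x. 0)" by (auto simp: indicator_def fun_eq_iff)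
        then show ?thesis by simp
      qed
      finally have "measure M (\<Inter>j. D j) = 0" unfolding DI by (simp add: measure_def)
      with finite_Lim_measure_decseq[OF Ds Dd] have "(\<lambda>j. measure M (D j)) \<longlonglongrightarrow> 0" by simp
      from order_tendstoD(2)[OF this \<gamma>] obtain j where "measure M (D j) < \<gamma>"
        by (auto simp: eventually_sequentially)
      then show ?thesis by (intro that[of "1 / real (Suc j)"]) (auto simp: D_def)
    qed
    define v where "v = min 1 (\<gamma> * r^2 / (2 * real K))"
    have v: "0 < v" "v \<le> 1" "real K * v \<le> \<gamma> * r^2 / 2"
      using \<gamma> r Kpos by (auto simp: v_def field_simps min_def)
    define \<delta> where "\<delta> = min (v / (3 * (2 + 2 * real K))) (1 / (2 * real K))"
    have \<delta>: "0 < \<delta>" "(2 + 2 * real K) * \<delta> \<le> v / 3" "real K * \<delta> \<le> 1 / 2"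
    proof -
      have d1: "\<delta> \<le> v / (3 * (2 + 2 * real K))" "\<delta> \<le> 1 / (2 * real K)" by (auto simp: \<delta>_def)
      have "(2 + 2 * real K) * \<delta> \<le> (2 + 2 * real K) * (v / (3 * (2 + 2 * real K)))"
        using d1(1) Kpos by (intro mult_left_mono) auto
      also have "\<dots> = v / 3" using Kpos by (simp add: field_simps)
      finally have e2: "(2 + 2 * real K) * \<delta> \<le> v / 3" .
      have "real K * \<delta> \<le> real K * (1 / (2 * real K))" using d1(2) Kpos by (intro mult_left_mono) auto
      also have "\<dots> = 1/2" using Kpos by simp
      finally have e3: "real K * \<delta> \<le> 1 / 2" .
      have "0 < \<delta>" using v Kpos by (simp add: \<delta>_def)
      then show "0 < \<delta>" "(2 + 2 * real K) * \<delta> \<le> v / 3" "real K * \<delta> \<le> 1 / 2" using e2 e3 by simp_all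
    qed
    obtain N :: nat where N: "0 < N" "1 / real N \<le> v / 3" "1 / real N \<le> r / real K"
    proof -
      have "0 < min (v/3) (r / real K)" using v r Kpos by simp
      then obtain j where "inverse (real (Suc j)) < min (v/3) (r / real K)" using reals_Archimedean by blast
      then show ?thesis by (intro that[of "Suc j"]) (auto simp: inverse_eq_divide)
    qed
    define L where "L = max (2 * real K / (\<gamma> * r^2)) (6 * a0 / v)"
    have L: "0 < L"
    proof -
      have "0 < 2 * real K / (\<gamma> * r^2)" using Kpos \<gamma> r by simp
      then show ?thesis by (simp add: L_def less_max_iff_disj)
    qed
    obtain n1 :: nat where n1: "4 * L / \<tau> < real n1" using reals_Archimedean2 by blast
    have "eventually (\<lambda>n. measure M {\<omega> \<in> space M. \<tau>/2 < \<bar>DE n \<omega> (X i \<omega>) - f (X i \<omega>)\<bar>} < \<gamma>) sequentially"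
    proof -
      have t: "(\<lambda>n. measure M {\<omega> \<in> space M. \<tau>/2 < \<bar>DE n \<omega> (X i \<omega>) - f (X i \<omega>)\<bar>}) \<longlonglongrightarrow> 0"
        by (rule DE_cons) (use \<tau> in simp)
      show ?thesis by (rule order_tendstoD(2)[OF t \<gamma>])
    qed
    then obtain n2 where n2: "\<And>n. n \<ge> n2 \<Longrightarrow> measure M {\<omega> \<in> space M. \<tau>/2 < \<bar>DE n \<omega> (Z \<omega>) - f (Z \<omega>)\<bar>} < \<gamma>"
      by (auto simp: eventually_sequentially Z_def)
    have "eventually (\<lambda>n. measure M {\<omega> \<in> space M. \<delta> < vdist K (NN n \<omega> (X i \<omega>)) (\<eta> (X i \<omega>))} < \<gamma>) sequentially"
    proof -
      have t: "(\<lambda>n. measure M {\<omega> \<in> space M. \<delta> < vdist K (NN n \<omega> (X i \<omega>)) (\<eta> (X i \<omega>))}) \<longlonglongrightarrow> 0"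
        by (rule NN_cons) (use \<delta> in simp)
      show ?thesis by (rule order_tendstoD(2)[OF t \<gamma>])
    qed
    then obtain n3 where n3: "\<And>n. n \<ge> n3 \<Longrightarrow> measure M {\<omega> \<in> space M. \<delta> < vdist K (NN n \<omega> (Z \<omega>)) (\<eta> (Z \<omega>))} < \<gamma>"
      by (auto simp: eventually_sequentially Z_def)
    have core: "measure M (E n) < 4 * \<gamma>" if n: "i < n" "n1 \<le> n" "n2 \<le> n" "n3 \<le> n" for n
    proof -
      note [measurable] = DEF[OF n(1)] NNF[OF n(1)] \<eta>F[OF n(1)]
      have spF: "space (data_sigma M X Y n) = space M" by (simp add: data_sigma_def)
      have inM: "S \<in> sets M" if "S \<in> sets (data_sigma M X Y n)" for S
        using sub[of n] that by (auto simp: subalgebra_def)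
      have nL: "L \<le> real n * \<tau> / 4"
      proof -
        have "4 * L / \<tau> < real n" using n1 n(2) by linarith
        then show ?thesis using \<tau> by (simp add: field_simps)
      qed
      define Good where "Good = {\<omega> \<in> space M. \<tau>/2 \<le> DE n \<omega> (Z \<omega>) \<and> vdist K (NN n \<omega> (Z \<omega>)) (\<eta> (Z \<omega>)) \<le> \<delta>}"
      have GoodF: "Good \<in> sets (data_sigma M X Y n)"
      proof -
        have "Good = {\<omega> \<in> space (data_sigma M X Y n). \<tau>/2 \<le> DE n \<omega> (Z \<omega>) \<and> vdist K (NN n \<omega> (Z \<omega>)) (\<eta> (Z \<omega>)) \<le> \<delta>}"
          by (simp add: Good_def spF)
        also have "\<dots> \<in> sets (data_sigma M X Y n)" unfolding vdist_def by measurable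
        finally show ?thesis .
      qed
      define Gs where "Gs = PiE {..<K} (\<lambda>_. {0..N})"
      have Gsfin: "finite Gs" unfolding Gs_def by (intro finite_PiE) auto
      define Gset where "Gset g = {\<omega> \<in> space M. \<forall>k<K. real (g k) \<le> real N * \<eta> (Z \<omega>) k \<and> real N * \<eta> (Z \<omega>) k < real (g k) + 1}" for g :: "nat \<Rightarrow> nat"
      have GsetF: "Gset g \<in> sets (data_sigma M X Y n)" for g
      proof -
        have "Gset g = {\<omega> \<in> space (data_sigma M X Y n). \<forall>k<K. real (g k) \<le> real N * \<eta> (Z \<omega>) k \<and> real N * \<eta> (Z \<omega>) k < real (g k) + 1}"
          by (simp add: Gset_def spF)
        also have "\<dots> \<in> sets (data_sigma M X Y n)" by measurable
        finally show ?thesis .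
      qed
      define c where "c g = (\<lambda>k. real (g k) / real N)" for g :: "nat \<Rightarrow> nat"
      define A where "A g = {q \<in> space (PiM {..<K} (\<lambda>_. borel)). r < vdist K q (c g)}" for g
      have As: "A g \<in> sets (PiM {..<K} (\<lambda>_. borel))" for g unfolding A_def by measurable
      have \<eta>1: "\<eta> x k \<le> 1" if "k < K" for x k
      proof -
        have "\<eta> x k \<le> (\<Sum>k<K. \<eta> x k)" using that \<eta>_nonneg by (intro member_le_sum) auto
        then show ?thesis using \<eta>_sum by simp
      qed
      have cover: "\<exists>g\<in>Gs. \<omega> \<in> Gset g" if "\<omega> \<in> space M" for \<omega>
      proof -
        define g where "g = (\<lambda>k\<in>{..<K}. nat \<lfloor>real N * \<eta> (Z \<omega>) k\<rfloor>)"
        have fl: "real (nat \<lfloor>real N * \<eta> (Z \<omega>) k\<rfloor>) = of_int \<lfloor>real N * \<eta> (Z \<omega>) k\<rfloor>" for k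
          using \<eta>_nonneg[of "Z \<omega>" k] by simp
        have "g \<in> Gs"
        proof -
          have "nat \<lfloor>real N * \<eta> (Z \<omega>) k\<rfloor> \<le> N" if "k < K" for k
          proof -
            have "real N * \<eta> (Z \<omega>) k \<le> real N" using \<eta>1[OF that] by (simp add: mult_left_le)
            then have "\<lfloor>real N * \<eta> (Z \<omega>) k\<rfloor> \<le> int N" by linarith
            then show ?thesis by simp
          qed
          then show ?thesis by (auto simp: Gs_def g_def)
        qed
        moreover have "\<omega> \<in> Gset g" using that
          by (auto simp: Gset_def g_def fl)
        ultimately show ?thesis by blast
      qed
      have disj: "disjoint_family_on (\<lambda>g. Gset g \<inter> Good) Gs"
        unfolding disjoint_family_on_def
      proof (intro ballI impI)
        fix g g' assume g: "g \<in> Gs" "g' \<in> Gs" "g \<noteq> g'"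
        then obtain k where k: "k < K" "g k \<noteq> g' k" unfolding Gs_def
          by (metis PiE_E ext lessThan_iff)
        show "(Gset g \<inter> Good) \<inter> (Gset g' \<inter> Good) = {}"
        proof (rule ccontr)
          assume "(Gset g \<inter> Good) \<inter> (Gset g' \<inter> Good) \<noteq> {}"
          then obtain \<omega> where "\<omega> \<in> Gset g" "\<omega> \<in> Gset g'" by auto
          then have "real (g k) < real (g' k) + 1" "real (g' k) < real (g k) + 1"
            using k(1) unfolding Gset_def by force+
          then have "g k = g' k" by linarith
          then show False using k by simp
        qed
      qed
      have cclose: "\<bar>\<eta> (Z \<omega>) k - c g k\<bar> \<le> 1 / real N" if "\<omega> \<in> Gset g" "k < K" for \<omega> g k
      proof -
        have "real (g k) \<le> real N * \<eta> (Z \<omega>) k" "real N * \<eta> (Z \<omega>) k < real (g k) + 1"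
          using that unfolding Gset_def by auto
        then have a: "\<bar>real N * \<eta> (Z \<omega>) k - real (g k)\<bar> \<le> 1" by simp
        have "\<eta> (Z \<omega>) k - c g k = (real N * \<eta> (Z \<omega>) k - real (g k)) / real N"
          using N(1) by (simp add: c_def field_simps)
        then have "\<bar>\<eta> (Z \<omega>) k - c g k\<bar> = \<bar>real N * \<eta> (Z \<omega>) k - real (g k)\<bar> / real N" by simp
        also have "\<dots> \<le> 1 / real N" using a N(1) by (intro divide_right_mono) auto
        finally show ?thesis .
      qed
      have cdist: "vdist K (c g) (\<eta> (Z \<omega>)) \<le> r" if "\<omega> \<in> Gset g" for \<omega> g
      proof -
        have "(vdist K (c g) (\<eta> (Z \<omega>)))^2 \<le> real K * (1 / real N)^2"
          using cclose[OF that] by (intro vdist_le_coord) (auto simp: abs_minus_commute)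
        also have "\<dots> \<le> real K * (r / real K)^2"
          using N by (intro mult_left_mono power_mono) auto
        also have "\<dots> = r^2 / real K" using Kpos by (simp add: power2_eq_square field_simps)
        also have "\<dots> \<le> r^2 / 1" using K by (intro divide_left_mono) auto
        finally have "(vdist K (c g) (\<eta> (Z \<omega>)))^2 \<le> r^2" by simp
        moreover have "0 \<le> vdist K (c g) (\<eta> (Z \<omega>))" by (simp add: vdist_def sum_nonneg)
        ultimately show ?thesis using r by (simp add: power2_le_iff_abs_le)
      qed
      let ?P = "\<lambda>g. {\<omega> \<in> space M. p n \<omega> \<in> A g}"
      have incl: "E n \<subseteq> (space M - Good) \<union> (\<Union>g\<in>Gs. Gset g \<inter> Good \<inter> ?P g)"
      proof
        fix \<omega> assume w: "\<omega> \<in> E n"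
        show "\<omega> \<in> (space M - Good) \<union> (\<Union>g\<in>Gs. Gset g \<inter> Good \<inter> ?P g)"
        proof (cases "\<omega> \<in> Good")
          case True
          have wM: "\<omega> \<in> space M" using w by (simp add: E_def)
          obtain g where g: "g \<in> Gs" "\<omega> \<in> Gset g" using cover[OF wM] by blast
          have "\<epsilon> < vdist K (p n \<omega>) (\<eta> (Z \<omega>))" using w by (simp add: E_def)
          also have "\<dots> \<le> vdist K (p n \<omega>) (c g) + vdist K (c g) (\<eta> (Z \<omega>))" by (rule vdist_triangle)
          finally have "r < vdist K (p n \<omega>) (c g)" using cdist[OF g(2)] by (simp add: r_def)
          moreover have "p n \<omega> \<in> space (PiM {..<K} (\<lambda>_. borel))" using p_meas[of n] wM by (rule measurable_space)
          ultimately have "\<omega> \<in> ?P g" using wM by (simp add: A_def)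
          then show ?thesis using g True by auto
        next
          case False
          then show ?thesis using w by (auto simp: E_def)
        qed
      qed
      have bad: "space M - Good \<subseteq> {\<omega> \<in> space M. f (Z \<omega>) \<le> \<tau>} \<union> {\<omega> \<in> space M. \<tau>/2 < \<bar>DE n \<omega> (Z \<omega>) - f (Z \<omega>)\<bar>}
            \<union> {\<omega> \<in> space M. \<delta> < vdist K (NN n \<omega> (Z \<omega>)) (\<eta> (Z \<omega>))}"
      proof
        fix \<omega> assume w: "\<omega> \<in> space M - Good"
        show "\<omega> \<in> {\<omega> \<in> space M. f (Z \<omega>) \<le> \<tau>} \<union> {\<omega> \<in> space M. \<tau>/2 < \<bar>DE n \<omega> (Z \<omega>) - f (Z \<omega>)\<bar>}
            \<union> {\<omega> \<in> space M. \<delta> < vdist K (NN n \<omega> (Z \<omega>)) (\<eta> (Z \<omega>))}"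
        proof (cases "\<tau>/2 \<le> DE n \<omega> (Z \<omega>)")
          case True then show ?thesis using w by (auto simp: Good_def)
        next
          case False
          have "f (Z \<omega>) \<le> \<tau> \<or> \<tau>/2 < \<bar>DE n \<omega> (Z \<omega>) - f (Z \<omega>)\<bar>" using False by linarith
          then show ?thesis using w by auto
        qed
      qed
      have hb: "measure (dirichlet K (\<lambda>k. \<alpha> k + real n * DE n \<omega> (Z \<omega>) * NN n \<omega> (Z \<omega>) k)) (A g) \<le> \<gamma>"
        if w: "\<omega> \<in> Gset g \<inter> Good" for \<omega> g
      proof -
        define s where "s = real n * DE n \<omega> (Z \<omega>)"
        define NNv where "NNv = NN n \<omega> (Z \<omega>)"
        define \<eta>v where "\<eta>v = \<eta> (Z \<omega>)"
        define B where "B = (\<Sum>k<K. \<alpha> k + s * NNv k)"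
        have Gd: "\<tau>/2 \<le> DE n \<omega> (Z \<omega>)" "vdist K NNv \<eta>v \<le> \<delta>" using w by (auto simp: Good_def NNv_def \<eta>v_def)
        have s0: "0 \<le> s" using DE_nonneg by (simp add: s_def)
        note mb = mean_bound[where K=K and \<alpha>=\<alpha> and \<eta>=\<eta>v and NN=NNv and \<delta>=\<delta> and s=s, OF K \<alpha>_pos \<eta>_nonneg[of "Z \<omega>", folded \<eta>v_def] \<eta>_sum[of "Z \<omega>", folded \<eta>v_def] NN_nonneg[of n \<omega> "Z \<omega>", folded NNv_def] Gd(2) \<delta>(3) s0,
            unfolded \<eta>v_def[symmetric] NNv_def[symmetric] B_def[symmetric] a0_def[symmetric]]
        have sB: "real n * \<tau> / 4 \<le> B"
        proof -
          have "real n * (\<tau>/2) \<le> s" unfolding s_def using Gd(1) by (intro mult_left_mono) auto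
          then show ?thesis using mb(1) by simp
        qed
        have m3: "\<bar>(\<alpha> k + s * NNv k) / B - \<eta>v k\<bar> \<le> 2 * a0 / B + (2 + 2 * real K) * \<delta>" if "k < K" for k
          by (rule mb(3)[OF _ that]) simp
        have LB: "L \<le> B" using nL sB by simp
        have Bpos: "0 < B" by (rule mb(2))
        have t1: "real K / (B + 1) \<le> \<gamma> * r^2 / 2"
        proof -
          have "2 * real K / (\<gamma> * r^2) \<le> B" using LB by (simp add: L_def)
          then have "2 * real K \<le> B * (\<gamma> * r^2)" using \<gamma> r by (simp add: field_simps)
          moreover have "B * (\<gamma> * r^2) \<le> (B + 1) * (\<gamma> * r^2)" using \<gamma> r by (intro mult_right_mono) auto
          ultimately have "real K \<le> (B + 1) * (\<gamma> * r^2 / 2)" by simp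
          then show ?thesis using Bpos by (simp add: pos_divide_le_eq mult.commute)
        qed
        have a0B: "2 * a0 / B \<le> v / 3"
        proof -
          have "6 * a0 / v \<le> B" using LB by (simp add: L_def)
          then have "6 * a0 \<le> B * v" using v by (simp add: field_simps)
          then show ?thesis using Bpos by (simp add: field_simps)
        qed
        have coord: "\<bar>(\<alpha> k + s * NNv k) / B - c g k\<bar> \<le> v" if k: "k < K" for k
        proof -
          have "\<bar>(\<alpha> k + s * NNv k) / B - c g k\<bar> \<le> \<bar>(\<alpha> k + s * NNv k) / B - \<eta>v k\<bar> + \<bar>\<eta>v k - c g k\<bar>"
            using abs_triangle_ineq[of "(\<alpha> k + s * NNv k) / B - \<eta>v k" "\<eta>v k - c g k"] by simp
          also have "\<dots> \<le> (2 * a0 / B + (2 + 2 * real K) * \<delta>) + 1 / real N"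
            using m3[OF k] cclose[of \<omega> g k] w k by (intro add_mono) (auto simp: \<eta>v_def)
          also have "\<dots> \<le> v" using a0B \<delta>(2) N(2) by linarith
          finally show ?thesis .
        qed
        have t2: "(\<Sum>k<K. ((\<alpha> k + s * NNv k) / B - c g k)^2) \<le> \<gamma> * r^2 / 2"
        proof -
          have "(\<Sum>k<K. ((\<alpha> k + s * NNv k) / B - c g k)^2) \<le> (\<Sum>k<K. v^2)"
          proof (intro sum_mono)
            fix k assume "k \<in> {..<K}"
            then have "\<bar>(\<alpha> k + s * NNv k) / B - c g k\<bar>^2 \<le> v^2" using coord[of k] by (intro power_mono) auto
            then show "((\<alpha> k + s * NNv k) / B - c g k)^2 \<le> v^2" by simp
          qed
          also have "\<dots> = real K * v^2" by simp
          also have "\<dots> \<le> real K * v" using v by (intro mult_left_mono) (auto simp: power2_eq_square mult_le_one)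
          finally show ?thesis using v(3) by linarith
        qed
        have pos: "0 < \<alpha> k + s * NNv k" if "k < K" for k
          using \<alpha>_pos[OF that] s0 NN_nonneg[of n \<omega> "Z \<omega>" k] by (simp add: NNv_def add_pos_nonneg)
        have cnn: "0 \<le> c g k" for k by (simp add: c_def)
        have "measure (dirichlet K (\<lambda>k. \<alpha> k + s * NNv k)) (A g)
            \<le> (real K / (B + 1) + (\<Sum>k<K. ((\<alpha> k + s * NNv k) / B - c g k)^2)) / r^2"
          unfolding A_def B_def using dir_cheb[where K=K and \<beta>="\<lambda>k. \<alpha> k + s * NNv k" and r=r and c="c g", OF K pos r cnn] by simp
        also have "\<dots> \<le> (\<gamma> * r^2 / 2 + \<gamma> * r^2 / 2) / r^2" using t1 t2 r by (intro divide_right_mono add_mono) auto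
        also have "\<dots> = \<gamma>" using r by simp
        finally show ?thesis by (simp add: s_def NNv_def)
      qed
      have each: "measure M (Gset g \<inter> Good \<inter> ?P g) \<le> \<gamma> * measure M (Gset g \<inter> Good)" for g
      proof -
        have "measure M ((Gset g \<inter> Good) \<inter> ?P g) \<le> \<gamma> * measure M (Gset g \<inter> Good)"
          by (rule cond_bound[OF M sub[of n] _ p_meas[of n] As p_cond[OF n(1) As, unfolded Z_def[symmetric]] hb])
             (use GsetF GoodF in auto)
        then show ?thesis by (simp add: Int_assoc)
      qed
      have GM: "Gset g \<inter> Good \<in> sets M" for g using GsetF GoodF inM by auto
      have PM: "?P g \<in> sets M" for g using p_meas[of n] As by measurable
      have DEM[measurable]: "(\<lambda>\<omega>. DE n \<omega> (Z \<omega>)) \<in> borel_measurable M"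
        by (rule measurable_from_subalg[OF sub DEF[OF n(1)]])
      have NNM[measurable]: "(\<lambda>\<omega>. NN n \<omega> (Z \<omega>) k) \<in> borel_measurable M" for k
        by (rule measurable_from_subalg[OF sub NNF[OF n(1)]])
      define S1 where "S1 = {\<omega> \<in> space M. f (Z \<omega>) \<le> \<tau>}"
      define S2 where "S2 = {\<omega> \<in> space M. \<tau>/2 < \<bar>DE n \<omega> (Z \<omega>) - f (Z \<omega>)\<bar>}"
      define S3 where "S3 = {\<omega> \<in> space M. \<delta> < vdist K (NN n \<omega> (Z \<omega>)) (\<eta> (Z \<omega>))}"
      have S1M: "S1 \<in> sets M" unfolding S1_def by measurable
      have S2M: "S2 \<in> sets M" unfolding S2_def by measurable
      have S3M: "S3 \<in> sets M" unfolding S3_def vdist_def by measurable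
      have GoodM: "Good \<in> sets M" using GoodF inM by blast
      have UM: "(\<Union>g\<in>Gs. Gset g \<inter> Good \<inter> ?P g) \<in> sets M"
        using GM PM Gsfin by (intro sets.finite_UN) auto
      have "measure M (E n) \<le> measure M ((space M - Good) \<union> (\<Union>g\<in>Gs. Gset g \<inter> Good \<inter> ?P g))"
        using incl GoodM UM by (intro finite_measure_mono) auto
      also have "\<dots> \<le> measure M (space M - Good) + measure M (\<Union>g\<in>Gs. Gset g \<inter> Good \<inter> ?P g)"
        using GoodM UM by (intro measure_Un_le) auto
      also have "measure M (\<Union>g\<in>Gs. Gset g \<inter> Good \<inter> ?P g) \<le> (\<Sum>g\<in>Gs. measure M (Gset g \<inter> Good \<inter> ?P g))"
        using GM PM Gsfin by (intro finite_measure_subadditive_finite) auto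
      also have "\<dots> \<le> (\<Sum>g\<in>Gs. \<gamma> * measure M (Gset g \<inter> Good))" by (intro sum_mono each)
      also have "\<dots> = \<gamma> * measure M (\<Union>g\<in>Gs. Gset g \<inter> Good)"
      proof -
        have "measure M (\<Union>g\<in>Gs. Gset g \<inter> Good) = (\<Sum>g\<in>Gs. measure M (Gset g \<inter> Good))"
          using GM Gsfin disj by (intro finite_measure_finite_Union) auto
        then show ?thesis by (simp add: sum_distrib_left)
      qed
      also have "\<dots> \<le> \<gamma> * 1" using \<gamma> by (intro mult_left_mono) auto
      also have "measure M (space M - Good) \<le> measure M (S1 \<union> S2 \<union> S3)"
        using bad S1M S2M S3M unfolding S1_def[symmetric] S2_def[symmetric] S3_def[symmetric]
        by (intro finite_measure_mono) auto
      also have "measure M (S1 \<union> S2 \<union> S3) \<le> measure M (S1 \<union> S2) + measure M S3"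
        using S1M S2M S3M by (intro measure_Un_le) auto
      also have "measure M (S1 \<union> S2) \<le> measure M S1 + measure M S2"
        using S1M S2M by (intro measure_Un_le) auto
      finally show ?thesis using \<tau>(2) n2[OF n(3)] n3[OF n(4)] unfolding S1_def S2_def S3_def by linarith
    qed
    show ?thesis by (rule exI[of _ "max (Suc i) (max n1 (max n2 n3))"]) (auto intro!: core)
  qed
  show "(\<lambda>n. measure M {\<omega> \<in> space M. \<epsilon> < vdist K (p n \<omega>) (\<eta> (X i \<omega>))}) \<longlonglongrightarrow> 0"
  proof (rule LIMSEQ_I)
    fix e :: real assume e: "0 < e"
    obtain n0 where n0: "\<And>n. n \<ge> n0 \<Longrightarrow> measure M (E n) < 4 * (e / 4)"
      using main[of "e/4"] e by auto
    show "\<exists>no. \<forall>n\<ge>no. norm (measure M {\<omega> \<in> space M. \<epsilon> < vdist K (p n \<omega>) (\<eta> (X i \<omega>))} - 0) < e"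
      using n0 by (auto simp: E_def Z_def)
  qed
qed

end
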